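(* Let $X$ be a reflexive real Banach space, $Y$ a real Banach space, $\Omega$ a measure space, $Z:=L^2(\Omega)$, and $e:Y\to Z$ a linear continuous dense embedding. Let $f:X\to\mathbb{R}$ and $g:X\to Y$ be such that $f$ and $x\mapsto\|g_+(x)\|_Z$ are weakly lower semicontinuous, $g$ is convex (with respect to the order of $Y$), $f$ is strongly convex, and the feasible set $\{x\in X: g(x)\le 0\}$ is nonempty. Let $(x^k)$ be generated by the augmented Lagrangian algorithm described in the context, where in Step 2 the iterate $x^{k+1}$ is chosen such that there is a sequence $\varepsilon_k\downarrow 0$ with $L_{\rho_k}(x^{k+1},w^k)\le L_{\rho_k}(x,w^k)+\varepsilon_k$ for all $x\in X$ and all $k$. Then the problem $\min f(x)$ s.t. $g(x)\le 0$ has a unique solution $\bar x$, and $x^k\to\bar x$ strongly in $X$.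
   Context: The order on $Y$ is induced by $Z$: $y\le 0$ in $Y$ means $e(y)\le 0$ a.e. on $\Omega$; $g$ convex means $g(tx+(1-t)x')\le t g(x)+(1-t)g(x')$ in this order for all $x,x'\in X$, $t\in[0,1]$. For $z\in Z$, $z_+:=\max\{z,0\}$ (pointwise); $g_+(x):=(e(g(x)))_+$, and $\min$ of elements of $Z$ is pointwise. The augmented Lagrangian is $L_\rho(x,\lambda):=f(x)+\frac{\rho}{2}\big\|\big(g(x)+\frac{\lambda}{\rho}\big)_+\big\|_Z^2$ for $x\in X$, $\lambda\in Z$, $\rho>0$. Algorithm: (S.0) Choose $(x^0,\lambda^0)\in X\times Z$, $\rho_0>0$, $w^{\max}\in Z$ with $w^{\max}\ge 0$, $\gamma>1$, $\tau\in(0,1)$; $k=0$. (S.2) Choose $w^k\in Z$ with $0\le w^k\le w^{\max}$ a.e. and compute an approximate minimizer $x^{k+1}$ of $L_{\rho_k}(\cdot,w^k)$. (S.3) Set $\lambda^{k+1}:=(w^k+\rho_k g(x^{k+1}))_+$. If $k=0$ or $\|\min\{-g(x^{k+1}),w^k/\rho_k\}\|_Z\le\tau\|\min\{-g(x^k),w^{k-1}/\rho_{k-1}\}\|_Z$, set $\rho_{k+1}:=\rho_k$; else $\rho_{k+1}:=\gamma\rho_k$. (S.4) $k\leftarrow k+1$, go to (S.2). The algorithm is run without stopping. *)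

theory Defs
  imports "HOL-Analysis.Analysis"
begin

definition reflexive_space :: "'x::real_normed_vector itself \<Rightarrow> bool" where
  "reflexive_space _ \<longleftrightarrow>
     (\<forall>\<Phi> :: ('x \<Rightarrow>\<^sub>L real) \<Rightarrow>\<^sub>L real. \<exists>x::'x. \<forall>\<phi>. blinfun_apply \<Phi> \<phi> = blinfun_apply \<phi> x)"

text \<open>Lower semicontinuity with respect to the weak topology of X, written with the
  basic weak neighbourhoods  {y. \<forall>\<phi>\<in>\<Phi>. |\<phi> y - \<phi> x| < \<epsilon>}, \<Phi> a finite set of
  bounded linear functionals.\<close>
definition weakly_lsc :: "('x::real_normed_vector \<Rightarrow> real) \<Rightarrow> bool" where
  "weakly_lsc F \<longleftrightarrow>
     (\<forall>x c. c < F x \<longrightarrow>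
        (\<exists>\<Phi> :: ('x \<Rightarrow>\<^sub>L real) set. \<exists>\<epsilon>>0. finite \<Phi> \<and>
           (\<forall>y. (\<forall>\<phi>\<in>\<Phi>. \<bar>blinfun_apply \<phi> y - blinfun_apply \<phi> x\<bar> < \<epsilon>) \<longrightarrow> c < F y)))"

definition strongly_convex :: "('x::real_normed_vector \<Rightarrow> real) \<Rightarrow> bool" where
  "strongly_convex f \<longleftrightarrow>
     (\<exists>\<mu>>0. \<forall>x x' t. 0 \<le> t \<and> t \<le> 1 \<longrightarrow>
        f (t *\<^sub>R x + (1 - t) *\<^sub>R x')
          \<le> t * f x + (1 - t) * f x' - \<mu> / 2 * t * (1 - t) * (norm (x - x'))\<^sup>2)"

text \<open>Elements of Z are represented by square-integrable measurable functions;
  equalities/inequalities in Z are meant almost everywhere.\<close>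
definition L2 :: "'w measure \<Rightarrow> ('w \<Rightarrow> real) set" where
  "L2 M = {z. z \<in> borel_measurable M \<and> integrable M (\<lambda>w. (z w)\<^sup>2)}"

definition L2norm :: "'w measure \<Rightarrow> ('w \<Rightarrow> real) \<Rightarrow> real" where
  "L2norm M z = sqrt (integral\<^sup>L M (\<lambda>w. (z w)\<^sup>2))"

definition dense_L2_embedding :: "'w measure \<Rightarrow> ('y::real_normed_vector \<Rightarrow> 'w \<Rightarrow> real) \<Rightarrow> bool" where
  "dense_L2_embedding M e \<longleftrightarrow>
     (\<forall>y. e y \<in> L2 M) \<and>
     (\<forall>a b y y'. AE w in M. e (a *\<^sub>R y + b *\<^sub>R y') w = a * e y w + b * e y' w) \<and>
     (\<exists>C. \<forall>y. L2norm M (e y) \<le> C * norm y) \<and>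
     (\<forall>y. (AE w in M. e y w = 0) \<longrightarrow> y = 0) \<and>
     (\<forall>z\<in>L2 M. \<forall>\<epsilon>>0. \<exists>y. L2norm M (\<lambda>w. e y w - z w) < \<epsilon>)"

text \<open>Convexity of g : X \<rightarrow> Y with respect to the order on Y induced by e.\<close>
definition order_convex :: "'w measure \<Rightarrow> ('y \<Rightarrow> 'w \<Rightarrow> real) \<Rightarrow> ('x::real_vector \<Rightarrow> 'y::real_vector) \<Rightarrow> bool" where
  "order_convex M e g \<longleftrightarrow>
     (\<forall>x x' t. 0 \<le> t \<and> t \<le> 1 \<longrightarrow>
        (AE w in M. e (g (t *\<^sub>R x + (1 - t) *\<^sub>R x') - (t *\<^sub>R g x + (1 - t) *\<^sub>R g x')) w \<le> 0))"

definition gplus :: "('y \<Rightarrow> 'w \<Rightarrow> real) \<Rightarrow> ('x \<Rightarrow> 'y) \<Rightarrow> 'x \<Rightarrow> 'w \<Rightarrow> real" where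
  "gplus e g x = (\<lambda>w. max (e (g x) w) 0)"

definition feasible :: "'w measure \<Rightarrow> ('y \<Rightarrow> 'w \<Rightarrow> real) \<Rightarrow> ('x \<Rightarrow> 'y) \<Rightarrow> 'x \<Rightarrow> bool" where
  "feasible M e g x \<longleftrightarrow> (AE w in M. e (g x) w \<le> 0)"

definition is_solution :: "'w measure \<Rightarrow> ('y \<Rightarrow> 'w \<Rightarrow> real) \<Rightarrow> ('x \<Rightarrow> real) \<Rightarrow> ('x \<Rightarrow> 'y) \<Rightarrow> 'x \<Rightarrow> bool" where
  "is_solution M e f g x \<longleftrightarrow> feasible M e g x \<and> (\<forall>x'. feasible M e g x' \<longrightarrow> f x \<le> f x')"

definition aug_lagr :: "'w measure \<Rightarrow> ('y \<Rightarrow> 'w \<Rightarrow> real) \<Rightarrow> ('x \<Rightarrow> real) \<Rightarrow> ('x \<Rightarrow> 'y)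
    \<Rightarrow> real \<Rightarrow> 'x \<Rightarrow> ('w \<Rightarrow> real) \<Rightarrow> real" where
  "aug_lagr M e f g \<rho> x lam =
     f x + \<rho> / 2 * (L2norm M (\<lambda>w. max (e (g x) w + lam w / \<rho>) 0))\<^sup>2"

definition compl_res :: "'w measure \<Rightarrow> ('y \<Rightarrow> 'w \<Rightarrow> real) \<Rightarrow> ('x \<Rightarrow> 'y) \<Rightarrow> 'x \<Rightarrow> ('w \<Rightarrow> real) \<Rightarrow> real \<Rightarrow> real" where
  "compl_res M e g x w \<rho> = L2norm M (\<lambda>s. min (- e (g x) s) (w s / \<rho>))"

end

theory Submission
  imports Defs
begin

lemma wlsc_ball:
  fixes F :: "'x::real_normed_vector \<Rightarrow> real"
  assumes "weakly_lsc F" "c < F x0"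
  shows "\<exists>r>0. \<forall>y. norm (y - x0) < r \<longrightarrow> c < F y"
proof -
  obtain \<Phi> :: "('x \<Rightarrow>\<^sub>L real) set" and \<epsilon> where fin: "finite \<Phi>" and ep: "\<epsilon> > 0"
    and H: "\<forall>y. (\<forall>\<phi>\<in>\<Phi>. \<bar>blinfun_apply \<phi> y - blinfun_apply \<phi> x0\<bar> < \<epsilon>) \<longrightarrow> c < F y"
    using assms unfolding weakly_lsc_def by blast
  define B where "B = (\<Sum>\<phi>\<in>\<Phi>. norm \<phi>) + 1"
  have B1: "B \<ge> 1" unfolding B_def by (simp add: sum_nonneg)
  have nB: "norm \<phi> \<le> B" if "\<phi> \<in> \<Phi>" for \<phi>
  proof -
    have "norm \<phi> \<le> (\<Sum>\<phi>\<in>\<Phi>. norm \<phi>)" using fin that by (intro member_le_sum) auto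
    thus ?thesis unfolding B_def by simp
  qed
  show ?thesis
  proof (intro exI[of _ "\<epsilon> / B"] conjI allI impI)
    show "\<epsilon> / B > 0" using ep B1 by simp
    fix y assume y: "norm (y - x0) < \<epsilon> / B"
    have "\<bar>blinfun_apply \<phi> y - blinfun_apply \<phi> x0\<bar> < \<epsilon>" if "\<phi> \<in> \<Phi>" for \<phi>
    proof -
      have "\<bar>blinfun_apply \<phi> y - blinfun_apply \<phi> x0\<bar> = norm (blinfun_apply \<phi> (y - x0))"
        by (simp add: blinfun.diff_right)
      also have "\<dots> \<le> norm \<phi> * norm (y - x0)" by (rule norm_blinfun)
      also have "\<dots> \<le> B * norm (y - x0)" using nB[OF that] by (simp add: mult_right_mono)
      also have "\<dots> < B * (\<epsilon> / B)" using y B1 by (intro mult_strict_left_mono) auto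
      also have "\<dots> = \<epsilon>" using B1 by simp
      finally show ?thesis .
    qed
    thus "c < F y" using H by blast
  qed
qed

lemma wlsc_seq:
  fixes F :: "'x::real_normed_vector \<Rightarrow> real"
  assumes "weakly_lsc F" "z \<longlonglongrightarrow> z0" "\<And>n. F (z n) \<le> b n" "b \<longlonglongrightarrow> L"
  shows "F z0 \<le> L"
proof (rule ccontr)
  assume "\<not> F z0 \<le> L"
  define c where "c = (L + F z0) / 2"
  have "c < F z0" "L < c" using \<open>\<not> F z0 \<le> L\<close> unfolding c_def by auto
  obtain r where r: "r > 0" "\<And>y. norm (y - z0) < r \<Longrightarrow> c < F y"
    using wlsc_ball[OF assms(1) \<open>c < F z0\<close>] by blast
  have "eventually (\<lambda>n. dist (z n) z0 < r) sequentially"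
    using assms(2) r(1) by (simp add: tendsto_iff)
  moreover have "eventually (\<lambda>n. b n < c) sequentially"
    using assms(4) \<open>L < c\<close> by (simp add: order_tendsto_iff)
  ultimately have "eventually (\<lambda>n. False) sequentially"
  proof eventually_elim
    case (elim n)
    then have "c < F (z n)" using r(2)[of "z n"] by (simp add: dist_norm)
    with assms(3)[of n] elim show False by simp
  qed
  thus False by simp
qed

lemma f_lower_bound:
  fixes f :: "'x::real_normed_vector \<Rightarrow> real"
  assumes "weakly_lsc f" "\<mu> > 0"
    and sc: "\<And>x x' t. 0 \<le> t \<Longrightarrow> t \<le> 1 \<Longrightarrow> f (t *\<^sub>R x + (1 - t) *\<^sub>R x')
          \<le> t * f x + (1 - t) * f x' - \<mu> / 2 * t * (1 - t) * (norm (x - x'))\<^sup>2"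
  shows "\<exists>m. \<forall>x. m \<le> f x"
proof -
  obtain r where r: "r > 0" "\<And>y. norm (y - 0) < r \<Longrightarrow> f 0 - 1 < f y"
    using wlsc_ball[OF assms(1), of "f 0 - 1" 0] by auto
  have "f 0 - 1 - 4 / (\<mu> * r\<^sup>2) \<le> f x" for x
  proof (cases "norm x < r")
    case True
    have "0 \<le> 4 / (\<mu> * r\<^sup>2)" using assms(2) r(1) by simp
    moreover have "f 0 - 1 < f x" using r(2)[of x] True by simp
    ultimately show ?thesis by linarith
  next
    case False
    define s where "s = norm x"
    have s: "s \<ge> r" using False s_def by simp
    define t where "t = r / (2 * s)"
    have t0: "0 < t" and t1: "t \<le> 1/2" using s r(1) unfolding t_def by (auto simp: field_simps)
    have "norm (t *\<^sub>R x + (1 - t) *\<^sub>R 0 - 0) = r / 2" using s r(1) unfolding t_def s_def by (auto simp: field_simps)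
    hence "f 0 - 1 < f (t *\<^sub>R x + (1 - t) *\<^sub>R 0)" using r by (intro r(2)) auto
    also have "\<dots> \<le> t * f x + (1 - t) * f 0 - \<mu> / 2 * t * (1 - t) * s\<^sup>2"
      using sc[of t x 0] t0 t1 s_def by simp
    finally have A: "t * f 0 - 1 + \<mu> / 2 * t * (1 - t) * s\<^sup>2 < t * f x" by (simp add: algebra_simps)
    have "\<mu> / 4 * t * s\<^sup>2 \<le> \<mu> / 2 * t * (1 - t) * s\<^sup>2"
      using t0 t1 assms(2) by (intro mult_right_mono) (auto simp: field_simps)
    with A have B: "t * f 0 - 1 + \<mu> / 4 * t * s\<^sup>2 < t * f x" by simp
    have ts: "t * s = r / 2" using s r(1) unfolding t_def by simp
    have "t * (f 0 - 4 / (\<mu> * r\<^sup>2)) \<le> t * f 0 - 1 + \<mu> / 4 * t * s\<^sup>2"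
    proof -
      have "0 \<le> \<mu> / 4 * t * (s - 4 / (\<mu> * r))\<^sup>2" using t0 assms(2) by simp
      moreover have "\<mu> / 4 * t * (s - 4 / (\<mu> * r))\<^sup>2 = \<mu> / 4 * t * s\<^sup>2 - 2 * t * s / r + t * 4 / (\<mu> * r\<^sup>2)"
        using assms(2) r(1) by (simp add: power2_eq_square field_simps)
      ultimately have "0 \<le> \<mu> / 4 * t * s\<^sup>2 - 2 * t * s / r + t * 4 / (\<mu> * r\<^sup>2)"
        by simp
      moreover have "2 * t * s / r = 1" using ts r(1) by simp
      ultimately have "0 \<le> \<mu> / 4 * t * s\<^sup>2 - 1 + t * 4 / (\<mu> * r\<^sup>2)" by linarith
      thus ?thesis by (simp add: algebra_simps)
    qed
    with B have "t * (f 0 - 4 / (\<mu> * r\<^sup>2)) < t * f x" by simp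
    hence "f 0 - 4 / (\<mu> * r\<^sup>2) < f x" using t0 by simp
    thus ?thesis by simp
  qed
  thus ?thesis by blast
qed

lemma abstract_solution:
  fixes f G :: "'x::banach \<Rightarrow> real"
  assumes mu: "\<mu> > 0"
  and sc: "\<And>x y. f ((1/2) *\<^sub>R x + (1/2) *\<^sub>R y) \<le> f x / 2 + f y / 2 - \<mu> / 8 * (norm (x - y))\<^sup>2"
  and fb: "\<And>x. m \<le> f x"
  and flsc: "\<And>z z0 b L. z \<longlonglongrightarrow> z0 \<Longrightarrow> (\<And>n. f (z n) \<le> b n) \<Longrightarrow> b \<longlonglongrightarrow> L \<Longrightarrow> f z0 \<le> L"
  and Glsc: "\<And>z z0 b L. z \<longlonglongrightarrow> z0 \<Longrightarrow> (\<And>n. G (z n) \<le> b n) \<Longrightarrow> b \<longlonglongrightarrow> L \<Longrightarrow> G z0 \<le> L"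
  and G0: "\<And>x. 0 \<le> G x"
  and Gmid: "\<And>x y. (G ((1/2) *\<^sub>R x + (1/2) *\<^sub>R y))\<^sup>2 \<le> (G x)\<^sup>2 + (G y)\<^sup>2"
  and feas: "G x0 = 0"
  shows "\<exists>xb. G xb = 0 \<and> (\<forall>y. G y = 0 \<longrightarrow> f xb \<le> f y) \<and>
     (\<forall>z::nat\<Rightarrow>'x. (\<lambda>k. G (z k)) \<longlonglongrightarrow> 0 \<longrightarrow> (\<forall>\<delta>>0. eventually (\<lambda>k. f xb - \<delta> \<le> f (z k)) sequentially))"
proof -
  define v where "v t = Inf (f ` {x. G x \<le> t})" for t
  have ne: "f ` {x. G x \<le> t} \<noteq> {}" if "t \<ge> 0" for t using feas that by (auto intro!: exI[of _ x0])
  have bb: "bdd_below (f ` {x. G x \<le> t})" for t using fb by (intro bdd_belowI[of _ m]) auto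
  have vle: "v t \<le> f x" if "G x \<le> t" for t x
    unfolding v_def using that bb by (intro cInf_lower) auto
  have vmono: "v t \<le> v s" if "0 \<le> s" "s \<le> t" for s t
    unfolding v_def using that ne[of s] bb[of t] by (intro cInf_superset_mono) auto
  define a where "a n = v (1 / real (Suc n))" for n
  have ainc: "incseq a" unfolding incseq_def a_def
  proof (intro allI impI)
    fix p q :: nat assume "p \<le> q"
    hence "1 / real (Suc q) \<le> 1 / real (Suc p)" by (simp add: frac_le)
    thus "v (1 / real (Suc p)) \<le> v (1 / real (Suc q))" by (intro vmono) auto
  qed
  have abd: "a i \<le> v 0" for i unfolding a_def by (rule vmono) auto
  obtain l where al: "a \<longlonglongrightarrow> l" and ail: "\<And>i. a i \<le> l"
    using incseq_convergent[OF ainc, of "v 0"] abd by blast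
  have lv0: "l \<le> v 0" using al abd by (intro LIMSEQ_le_const2) auto
  have "\<forall>n. \<exists>y. G y \<le> 1 / real (Suc (2*n+1)) \<and> f y < v (1 / real (Suc (2*n+1))) + 1 / real (Suc n)"
  proof
    fix n
    have "Inf (f ` {x. G x \<le> 1 / real (Suc (2*n+1))}) < v (1 / real (Suc (2*n+1))) + 1 / real (Suc n)"
      unfolding v_def by simp
    from cInf_lessD[OF ne this] show "\<exists>y. G y \<le> 1 / real (Suc (2*n+1)) \<and> f y < v (1 / real (Suc (2*n+1))) + 1 / real (Suc n)"
      by auto
  qed
  then obtain y where yG: "\<And>n. G (y n) \<le> 1 / real (Suc (2*n+1))"
    and yf0: "\<And>n. f (y n) < v (1 / real (Suc (2*n+1))) + 1 / real (Suc n)" by metis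
  have yf: "f (y n) \<le> l + 1 / real (Suc n)" for n
    using yf0[of n] ail[of "2*n+1"] unfolding a_def by linarith
  define d where "d n = l + 1 / real (Suc n) - a n" for n
  have d0: "d \<longlonglongrightarrow> 0"
  proof -
    have "(\<lambda>n. l + 1 / real (Suc n) - a n) \<longlonglongrightarrow> l + 0 - l"
      by (intro tendsto_intros al LIMSEQ_Suc[OF lim_inverse_n'])
    thus ?thesis unfolding d_def by simp
  qed
  have key: "\<mu> / 8 * (norm (y n - y m))\<^sup>2 \<le> d n" if "n \<le> m" for n m
  proof -
    let ?c = "(1/2) *\<^sub>R y n + (1/2) *\<^sub>R y m"
    have h1: "1 / real (Suc (2*k+1)) = 1 / (2 * real (Suc k))" for k by simp
    have g1: "G (y n) \<le> 1 / (2 * real (Suc n))" using yG[of n] h1 by simp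
    have g2: "G (y m) \<le> 1 / (2 * real (Suc n))"
    proof -
      have "1 / (2 * real (Suc m)) \<le> 1 / (2 * real (Suc n))" using that by (simp add: frac_le)
      thus ?thesis using yG[of m] h1[of m] by simp
    qed
    have "(G ?c)\<^sup>2 \<le> (1 / (2 * real (Suc n)))\<^sup>2 + (1 / (2 * real (Suc n)))\<^sup>2"
      using Gmid[of "y n" "y m"] power_mono[OF g1 G0, of 2] power_mono[OF g2 G0, of 2] by linarith
    also have "\<dots> = (1 / real (Suc n))\<^sup>2 / 2"
    proof -
      have "\<And>k::real. k > 0 \<Longrightarrow> (1 / (2 * k))\<^sup>2 + (1 / (2 * k))\<^sup>2 = (1 / k)\<^sup>2 / 2"
        by (simp add: power2_eq_square field_simps)
      from this[of "real (Suc n)"] show ?thesis by (simp only: of_nat_0_less_iff zero_less_Suc simp_thms)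
    qed
    also have "\<dots> \<le> (1 / real (Suc n))\<^sup>2" by simp
    finally have "G ?c \<le> 1 / real (Suc n)" by (rule power2_le_imp_le) simp
    hence ac: "a n \<le> f ?c" unfolding a_def by (rule vle)
    have fm: "f (y m) \<le> l + 1 / real (Suc n)"
    proof -
      have "1 / real (Suc m) \<le> 1 / real (Suc n)" using that by (simp add: frac_le)
      thus ?thesis using yf[of m] by linarith
    qed
    show ?thesis using sc[of "y n" "y m"] ac yf[of n] fm unfolding d_def by linarith
  qed
  have "Cauchy y"
  proof (rule CauchyI)
    fix e :: real assume e: "0 < e"
    have "eventually (\<lambda>n. d n < \<mu> / 8 * e\<^sup>2) sequentially"
      using order_tendstoD(2)[OF d0, of "\<mu> / 8 * e\<^sup>2"] e mu by simp
    then obtain N where N: "\<And>n. n \<ge> N \<Longrightarrow> d n < \<mu> / 8 * e\<^sup>2" by (auto simp: eventually_sequentially)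
    have *: "norm (y n - y m) < e" if "N \<le> n" "n \<le> m" for n m
    proof -
      have "\<mu> / 8 * (norm (y n - y m))\<^sup>2 < \<mu> / 8 * e\<^sup>2" using key[OF that(2)] N[OF that(1)] by linarith
      hence "(norm (y n - y m))\<^sup>2 < e\<^sup>2" using mu by simp
      thus ?thesis using e by (simp add: power_less_imp_less_base)
    qed
    show "\<exists>M. \<forall>m\<ge>M. \<forall>n\<ge>M. norm (y m - y n) < e"
    proof (intro exI allI impI)
      fix m n assume "N \<le> m" "N \<le> n"
      show "norm (y m - y n) < e"
      proof (cases "m \<le> n")
        case True thus ?thesis using *[of m n] \<open>N \<le> m\<close> by simp
      next
        case False thus ?thesis using *[of n m] \<open>N \<le> n\<close> by (simp add: norm_minus_commute)
      qed
    qed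
  qed
  then obtain ys where ys: "y \<longlonglongrightarrow> ys" using Cauchy_convergent_iff convergent_def by blast
  have "G ys \<le> 0"
  proof (rule Glsc[OF ys])
    show "G (y n) \<le> 1 / real (Suc (2*n+1))" for n by (rule yG)
    show "(\<lambda>n. 1 / real (Suc (2*n+1))) \<longlonglongrightarrow> 0"
      using LIMSEQ_subseq_LIMSEQ[OF lim_inverse_n', of "\<lambda>n. 2*n+2"]
      by (simp add: strict_mono_def o_def)
  qed
  hence Gys: "G ys = 0" using G0[of ys] by simp
  have fys: "f ys \<le> l"
  proof (rule flsc[OF ys yf])
    show "(\<lambda>n. l + 1 / real (Suc n)) \<longlonglongrightarrow> l"
      using LIMSEQ_Suc[OF tendsto_add[OF tendsto_const lim_inverse_n', of l]] by simp
  qed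
  show ?thesis
  proof (intro exI conjI allI impI)
    show "G ys = 0" by (rule Gys)
    fix yy assume "G yy = 0"
    hence "v 0 \<le> f yy" by (intro vle) simp
    thus "f ys \<le> f yy" using fys lv0 by simp
  next
    fix z :: "nat \<Rightarrow> 'x" and \<delta> :: real
    assume z: "(\<lambda>k. G (z k)) \<longlonglongrightarrow> 0" and \<delta>: "\<delta> > 0"
    have "eventually (\<lambda>n. l - \<delta> < a n) sequentially"
      using order_tendstoD(1)[OF al, of "l - \<delta>"] \<delta> by simp
    then obtain n where n: "l - \<delta> < a n" by (auto simp: eventually_sequentially)
    have "eventually (\<lambda>k. G (z k) < 1 / real (Suc n)) sequentially"
      using order_tendstoD(2)[OF z, of "1 / real (Suc n)"] by simp
    thus "eventually (\<lambda>k. f ys - \<delta> \<le> f (z k)) sequentially"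
    proof eventually_elim
      case (elim k)
      have "a n \<le> f (z k)" unfolding a_def using elim by (intro vle) simp
      thus ?case using n fys by linarith
    qed
  qed
qed

lemma L2_meas: "u \<in> L2 M \<Longrightarrow> u \<in> borel_measurable M" unfolding L2_def by auto
lemma L2_int: "u \<in> L2 M \<Longrightarrow> integrable M (\<lambda>w. (u w)\<^sup>2)" unfolding L2_def by auto

lemma L2norm_nonneg: "0 \<le> L2norm M u"
  unfolding L2norm_def by (intro real_sqrt_ge_zero integral_nonneg_AE) auto

lemma L2norm_sq: "(L2norm M u)\<^sup>2 = integral\<^sup>L M (\<lambda>w. (u w)\<^sup>2)"
  unfolding L2norm_def by (intro real_sqrt_pow2 integral_nonneg_AE) auto

lemma L2I:
  assumes "u \<in> borel_measurable M" "v \<in> L2 M" "AE w in M. \<bar>u w\<bar> \<le> \<bar>v w\<bar>"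
  shows "u \<in> L2 M"
proof -
  have "integrable M (\<lambda>w. (u w)\<^sup>2)"
  proof (rule Bochner_Integration.integrable_bound[OF L2_int[OF assms(2)]])
    show "(\<lambda>w. (u w)\<^sup>2) \<in> borel_measurable M" using assms(1) by measurable
    show "AE w in M. norm ((u w)\<^sup>2) \<le> norm ((v w)\<^sup>2)"
      using assms(3) by eventually_elim (simp add: abs_le_square_iff)
  qed
  thus ?thesis using assms(1) unfolding L2_def by auto
qed

lemma L2_add:
  assumes "u \<in> L2 M" "v \<in> L2 M"
  shows "(\<lambda>w. u w + v w) \<in> L2 M"
proof -
  have m: "u \<in> borel_measurable M" "v \<in> borel_measurable M" using assms L2_meas by auto
  have "integrable M (\<lambda>w. (u w + v w)\<^sup>2)"
  proof (rule Bochner_Integration.integrable_bound)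
    show "integrable M (\<lambda>w. 2 * (u w)\<^sup>2 + 2 * (v w)\<^sup>2)"
      using L2_int[OF assms(1)] L2_int[OF assms(2)] by auto
    show "(\<lambda>w. (u w + v w)\<^sup>2) \<in> borel_measurable M" using m by measurable
    show "AE w in M. norm ((u w + v w)\<^sup>2) \<le> norm (2 * (u w)\<^sup>2 + 2 * (v w)\<^sup>2)"
    proof (intro AE_I2)
      fix w
      have "0 \<le> (u w - v w)\<^sup>2" by simp
      hence "(u w + v w)\<^sup>2 \<le> 2 * (u w)\<^sup>2 + 2 * (v w)\<^sup>2"
        by (simp add: power2_eq_square algebra_simps)
      moreover have "norm ((u w + v w)\<^sup>2) = (u w + v w)\<^sup>2" by simp
      moreover have "norm (2 * (u w)\<^sup>2 + 2 * (v w)\<^sup>2) = 2 * (u w)\<^sup>2 + 2 * (v w)\<^sup>2" by simp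
      ultimately show "norm ((u w + v w)\<^sup>2) \<le> norm (2 * (u w)\<^sup>2 + 2 * (v w)\<^sup>2)" by simp
    qed
  qed
  thus ?thesis using m unfolding L2_def by auto
qed

lemma L2_cmult: "u \<in> L2 M \<Longrightarrow> (\<lambda>w. c * u w) \<in> L2 M"
  unfolding L2_def by (auto simp: power_mult_distrib)

lemma L2_uminus: "u \<in> L2 M \<Longrightarrow> (\<lambda>w. - u w) \<in> L2 M"
  unfolding L2_def by auto

lemma L2_divide: "u \<in> L2 M \<Longrightarrow> (\<lambda>w. u w / c) \<in> L2 M"
  using L2_cmult[of u M "1/c"] by simp

lemma L2_max0: "u \<in> L2 M \<Longrightarrow> (\<lambda>w. max (u w) 0) \<in> L2 M"
  by (rule L2I[of _ _ u]) (auto simp: L2_meas intro!: borel_measurable_max)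

lemma L2_min:
  assumes "u \<in> L2 M" "v \<in> L2 M" shows "(\<lambda>w. min (u w) (v w)) \<in> L2 M"
proof (rule L2I[of _ _ "\<lambda>w. \<bar>u w\<bar> + \<bar>v w\<bar>"])
  show "(\<lambda>w. min (u w) (v w)) \<in> borel_measurable M" using assms by (auto simp: L2_meas intro!: borel_measurable_min)
  have "(\<lambda>w. \<bar>u w\<bar>) \<in> L2 M"
    by (rule L2I[of _ _ u]) (auto simp: L2_meas assms intro!: borel_measurable_abs)
  moreover have "(\<lambda>w. \<bar>v w\<bar>) \<in> L2 M"
    by (rule L2I[of _ _ v]) (auto simp: L2_meas assms intro!: borel_measurable_abs)
  ultimately show "(\<lambda>w. \<bar>u w\<bar> + \<bar>v w\<bar>) \<in> L2 M" by (rule L2_add)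
qed auto

lemma L2_prod_int:
  assumes "u \<in> L2 M" "v \<in> L2 M" shows "integrable M (\<lambda>w. u w * v w)"
proof (rule Bochner_Integration.integrable_bound)
  show "integrable M (\<lambda>w. (u w)\<^sup>2 + (v w)\<^sup>2)" using L2_int[OF assms(1)] L2_int[OF assms(2)] by auto
  show "(\<lambda>w. u w * v w) \<in> borel_measurable M" using assms by (auto simp: L2_meas intro!: borel_measurable_times)
  show "AE w in M. norm (u w * v w) \<le> norm ((u w)\<^sup>2 + (v w)\<^sup>2)"
  proof (intro AE_I2)
    fix w
    have "0 \<le> (\<bar>u w\<bar> - \<bar>v w\<bar>)\<^sup>2" by simp
    hence "2 * \<bar>u w\<bar> * \<bar>v w\<bar> \<le> (u w)\<^sup>2 + (v w)\<^sup>2" by (simp add: power2_eq_square algebra_simps)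
    hence "\<bar>u w\<bar> * \<bar>v w\<bar> \<le> (u w)\<^sup>2 + (v w)\<^sup>2"
      using mult_nonneg_nonneg[of "\<bar>u w\<bar>" "\<bar>v w\<bar>"] by linarith
    moreover have "norm (u w * v w) = \<bar>u w\<bar> * \<bar>v w\<bar>" by (simp add: abs_mult)
    moreover have "norm ((u w)\<^sup>2 + (v w)\<^sup>2) = (u w)\<^sup>2 + (v w)\<^sup>2" by simp
    ultimately show "norm (u w * v w) \<le> norm ((u w)\<^sup>2 + (v w)\<^sup>2)" by simp
  qed
qed

lemma L2norm_mono:
  assumes "u \<in> L2 M" "v \<in> L2 M" "AE w in M. \<bar>u w\<bar> \<le> \<bar>v w\<bar>"
  shows "L2norm M u \<le> L2norm M v"
proof -
  have "integral\<^sup>L M (\<lambda>w. (u w)\<^sup>2) \<le> integral\<^sup>L M (\<lambda>w. (v w)\<^sup>2)"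
    using assms(3) by (intro integral_mono_AE L2_int assms(1,2)) (auto simp: abs_le_square_iff)
  thus ?thesis unfolding L2norm_def by simp
qed

lemma L2norm_zero_iff:
  assumes "u \<in> L2 M" shows "L2norm M u = 0 \<longleftrightarrow> (AE w in M. u w = 0)"
proof -
  have "L2norm M u = 0 \<longleftrightarrow> integral\<^sup>L M (\<lambda>w. (u w)\<^sup>2) = 0" unfolding L2norm_def by simp
  also have "\<dots> \<longleftrightarrow> (AE w in M. (u w)\<^sup>2 = 0)"
    by (intro integral_nonneg_eq_0_iff_AE L2_int assms) auto
  finally show ?thesis by simp
qed

lemma young_bound:
  fixes X A B :: real
  assumes A0: "A \<ge> 0" and B0: "B \<ge> 0" and H: "\<And>t. t > 0 \<Longrightarrow> X \<le> t * A + B / t"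
  shows "X \<le> 2 * sqrt A * sqrt B"
proof (cases "A > 0 \<and> B > 0")
  case True
  define a where "a = sqrt A"
  define b where "b = sqrt B"
  have a: "a > 0" "A = a\<^sup>2" and b: "b > 0" "B = b\<^sup>2" using True A0 B0 unfolding a_def b_def by auto
  have "X \<le> (b / a) * A + B / (b / a)" using a b by (intro H) auto
  also have "\<dots> = 2 * a * b" using a b by (simp add: power2_eq_square field_simps)
  finally show ?thesis unfolding a_def b_def by simp
next
  case False
  hence AB: "A = 0 \<or> B = 0" using A0 B0 by auto
  show ?thesis
  proof (rule ccontr)
    assume nx: "\<not> X \<le> 2 * sqrt A * sqrt B"
    hence X0: "X > 0" using AB by auto
    show False
    proof (cases "A = 0")
      case True
      define t where "t = 2 * (B + 1) / X"
      have t: "t > 0" using X0 B0 unfolding t_def by simp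
      have "X \<le> t * A + B / t" by (rule H[OF t])
      also have "\<dots> = B * X / (2 * (B + 1))" using True X0 B0 unfolding t_def by simp
      also have "\<dots> < X"
      proof -
        have "0 \<le> B * X" using X0 B0 by simp
        hence "B * X < 2 * (B + 1) * X" using X0 by (simp add: algebra_simps)
        thus ?thesis using B0 by (simp add: divide_less_eq add_pos_nonneg mult.commute)
      qed
      finally show False by simp
    next
      case False
      hence B0': "B = 0" using AB by simp
      have A0': "A > 0" using False A0 by simp
      have "X \<le> (X / (2 * A)) * A + B / (X / (2 * A))" using X0 A0' by (intro H) auto
      also have "\<dots> = X / 2" using A0' B0' by simp
      finally show False using X0 by simp
    qed
  qed
qed

lemma L2_cs:
  assumes "u \<in> L2 M" "v \<in> L2 M"
  shows "integral\<^sup>L M (\<lambda>w. u w * v w) \<le> L2norm M u * L2norm M v"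
proof -
  let ?A = "integral\<^sup>L M (\<lambda>w. (u w)\<^sup>2)" and ?B = "integral\<^sup>L M (\<lambda>w. (v w)\<^sup>2)"
  have "2 * integral\<^sup>L M (\<lambda>w. u w * v w) \<le> 2 * sqrt ?A * sqrt ?B"
  proof (rule young_bound)
    show "0 \<le> ?A" "0 \<le> ?B" by (auto intro: integral_nonneg_AE)
    fix t :: real assume t: "t > 0"
    have "2 * integral\<^sup>L M (\<lambda>w. u w * v w) = integral\<^sup>L M (\<lambda>w. 2 * (u w * v w))" by simp
    also have "\<dots> \<le> integral\<^sup>L M (\<lambda>w. t * (u w)\<^sup>2 + (v w)\<^sup>2 / t)"
    proof (intro integral_mono_AE AE_I2)
      show "integrable M (\<lambda>w. 2 * (u w * v w))" using L2_prod_int[OF assms] by auto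
      show "integrable M (\<lambda>w. t * (u w)\<^sup>2 + (v w)\<^sup>2 / t)" using L2_int[OF assms(1)] L2_int[OF assms(2)] by auto
      fix w
      have "0 \<le> (t * u w - v w)\<^sup>2 / t" using t by simp
      also have "(t * u w - v w)\<^sup>2 / t = t * (u w)\<^sup>2 + (v w)\<^sup>2 / t - 2 * (u w * v w)"
        using t by (simp add: power2_eq_square field_simps)
      finally show "2 * (u w * v w) \<le> t * (u w)\<^sup>2 + (v w)\<^sup>2 / t" by simp
    qed
    also have "\<dots> = t * ?A + ?B / t" using L2_int[OF assms(1)] L2_int[OF assms(2)] by simp
    finally show "2 * integral\<^sup>L M (\<lambda>w. u w * v w) \<le> t * ?A + ?B / t" .
  qed
  thus ?thesis unfolding L2norm_def by simp
qed

lemma L2_minkowski: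
  assumes "u \<in> L2 M" "v \<in> L2 M"
  shows "L2norm M (\<lambda>w. u w + v w) \<le> L2norm M u + L2norm M v"
proof -
  have "(L2norm M (\<lambda>w. u w + v w))\<^sup>2 = integral\<^sup>L M (\<lambda>w. (u w)\<^sup>2 + 2 * (u w * v w) + (v w)\<^sup>2)"
    unfolding L2norm_sq by (simp add: power2_eq_square algebra_simps)
  also have "\<dots> = (L2norm M u)\<^sup>2 + 2 * integral\<^sup>L M (\<lambda>w. u w * v w) + (L2norm M v)\<^sup>2"
    unfolding L2norm_sq using L2_int[OF assms(1)] L2_int[OF assms(2)] L2_prod_int[OF assms] by simp
  also have "\<dots> \<le> (L2norm M u)\<^sup>2 + 2 * (L2norm M u * L2norm M v) + (L2norm M v)\<^sup>2"
    using L2_cs[OF assms] by simp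
  also have "\<dots> = (L2norm M u + L2norm M v)\<^sup>2" by (simp add: power2_eq_square algebra_simps)
  finally show ?thesis
    by (rule power2_le_imp_le) (simp add: L2norm_nonneg add_nonneg_nonneg)
qed

lemma abstract_conv:
  fixes f G :: "'x::banach \<Rightarrow> real" and x :: "nat \<Rightarrow> 'x"
  assumes mu: "\<mu> > 0"
  and sc: "\<And>x y. f ((1/2) *\<^sub>R x + (1/2) *\<^sub>R y) \<le> f x / 2 + f y / 2 - \<mu> / 8 * (norm (x - y))\<^sup>2"
  and G0: "\<And>x. 0 \<le> G x"
  and Gmid: "\<And>x y. (G ((1/2) *\<^sub>R x + (1/2) *\<^sub>R y))\<^sup>2 \<le> (G x)\<^sup>2 + (G y)\<^sup>2"
  and Gxb: "G xb = 0"
  and lim: "\<forall>z::nat\<Rightarrow>'x. (\<lambda>k. G (z k)) \<longlonglongrightarrow> 0 \<longrightarrow> (\<forall>\<delta>>0. eventually (\<lambda>k. f xb - \<delta> \<le> f (z k)) sequentially)"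
  and xG: "(\<lambda>k. G (x k)) \<longlonglongrightarrow> 0"
  and xf: "\<And>\<delta>. \<delta> > 0 \<Longrightarrow> eventually (\<lambda>k. f (x k) \<le> f xb + \<delta>) sequentially"
  shows "x \<longlonglongrightarrow> xb"
proof -
  define z where "z k = (1/2) *\<^sub>R x k + (1/2) *\<^sub>R xb" for k
  have zG: "(\<lambda>k. G (z k)) \<longlonglongrightarrow> 0"
  proof (rule tendsto_sandwich[OF _ _ tendsto_const xG])
    show "eventually (\<lambda>k. 0 \<le> G (z k)) sequentially" using G0 by simp
    show "eventually (\<lambda>k. G (z k) \<le> G (x k)) sequentially"
    proof (intro always_eventually allI)
      fix k
      have "(G (z k))\<^sup>2 \<le> (G (x k))\<^sup>2" using Gmid[of "x k" xb] unfolding z_def Gxb by simp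
      thus "G (z k) \<le> G (x k)" using G0[of "x k"] by (rule power2_le_imp_le)
    qed
  qed
  show ?thesis
  proof (rule LIMSEQ_I)
    fix r :: real assume r: "r > 0"
    define \<delta> where "\<delta> = \<mu> * r\<^sup>2 / 24"
    have d: "\<delta> > 0" using mu r unfolding \<delta>_def by simp
    have "eventually (\<lambda>k. f xb - \<delta> \<le> f (z k)) sequentially" using lim[rule_format, OF zG d] .
    moreover have "eventually (\<lambda>k. f (x k) \<le> f xb + \<delta>) sequentially" using xf[OF d] .
    ultimately have "eventually (\<lambda>k. norm (x k - xb) < r) sequentially"
    proof eventually_elim
      case (elim k)
      have "\<mu> / 8 * (norm (x k - xb))\<^sup>2 \<le> 3 / 2 * \<delta>"
        using sc[of "x k" xb] elim unfolding z_def by linarith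
      hence "\<mu> * (norm (x k - xb))\<^sup>2 \<le> \<mu> * (r\<^sup>2 / 2)" unfolding \<delta>_def by simp
      hence "(norm (x k - xb))\<^sup>2 \<le> r\<^sup>2 / 2" using mu by (rule mult_left_le_imp_le)
      also have "\<dots> < r\<^sup>2" using r by simp
      finally show ?case using r by (simp add: power_less_imp_less_base)
    qed
    thus "\<exists>no. \<forall>n\<ge>no. norm (x n - xb) < r" by (simp add: eventually_sequentially)
  qed
qed

lemma abstract_unique:
  fixes f G :: "'x::banach \<Rightarrow> real"
  assumes mu: "\<mu> > 0"
  and sc: "\<And>x y. f ((1/2) *\<^sub>R x + (1/2) *\<^sub>R y) \<le> f x / 2 + f y / 2 - \<mu> / 8 * (norm (x - y))\<^sup>2"
  and G0: "\<And>x. 0 \<le> G x"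
  and Gmid: "\<And>x y. (G ((1/2) *\<^sub>R x + (1/2) *\<^sub>R y))\<^sup>2 \<le> (G x)\<^sup>2 + (G y)\<^sup>2"
  and a: "G a = 0" "\<forall>y. G y = 0 \<longrightarrow> f a \<le> f y"
  and b: "G b = 0" "\<forall>y. G y = 0 \<longrightarrow> f b \<le> f y"
  shows "a = b"
proof -
  let ?c = "(1/2) *\<^sub>R a + (1/2) *\<^sub>R b"
  have "(G ?c)\<^sup>2 \<le> 0" using Gmid[of a b] a b by simp
  hence "G ?c = 0" using G0[of ?c] by simp
  hence "f a \<le> f ?c" using a by blast
  moreover have "f a \<le> f b" using a(2) b(1) by blast
  moreover have "f b \<le> f a" using b(2) a(1) by blast
  ultimately have "\<mu> / 8 * (norm (a - b))\<^sup>2 \<le> 0" using sc[of a b] by linarith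
  hence "norm (a - b) = 0" using mu by (simp add: mult_le_0_iff)
  thus ?thesis by simp
qed

lemma ev_bound:
  fixes a :: "nat \<Rightarrow> real"
  assumes "eventually (\<lambda>k. a k \<le> c + u k) sequentially" "u \<longlonglongrightarrow> 0" "\<delta> > 0"
  shows "eventually (\<lambda>k. a k \<le> c + \<delta>) sequentially"
  using assms(1) order_tendstoD(2)[OF assms(2) assms(3)]
  by eventually_elim simp

theorem theorem4p3:
  fixes M :: "'w measure"
    and e :: "'y::banach \<Rightarrow> 'w \<Rightarrow> real"
    and f :: "'x::banach \<Rightarrow> real"
    and g :: "'x \<Rightarrow> 'y"
    and x :: "nat \<Rightarrow> 'x"
    and lam :: "nat \<Rightarrow> 'w \<Rightarrow> real"
    and wk :: "nat \<Rightarrow> 'w \<Rightarrow> real"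
    and \<rho> :: "nat \<Rightarrow> real"
    and wmax :: "'w \<Rightarrow> real"
    and \<gamma> \<tau> :: real
    and \<epsilon> :: "nat \<Rightarrow> real"
  assumes refl: "reflexive_space TYPE('x)"
    and emb: "dense_L2_embedding M e"
    and f_wlsc: "weakly_lsc f"
    and gp_wlsc: "weakly_lsc (\<lambda>x. L2norm M (gplus e g x))"
    and g_conv: "order_convex M e g"
    and f_sconv: "strongly_convex f"
    and feas: "\<exists>x. feasible M e g x"
    and lam0: "lam 0 \<in> L2 M"
    and rho0: "\<rho> 0 > 0"
    and wmax: "wmax \<in> L2 M" "AE s in M. 0 \<le> wmax s"
    and gamma: "\<gamma> > 1"
    and tau: "0 < \<tau>" "\<tau> < 1"
    and wk: "\<And>k. wk k \<in> L2 M" "\<And>k. AE s in M. 0 \<le> wk k s \<and> wk k s \<le> wmax s"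
    and eps: "decseq \<epsilon>" "\<epsilon> \<longlonglongrightarrow> 0"
    and approx_min: "\<And>k y. aug_lagr M e f g (\<rho> k) (x (Suc k)) (wk k)
                               \<le> aug_lagr M e f g (\<rho> k) y (wk k) + \<epsilon> k"
    and lam_upd: "\<And>k. lam (Suc k) = (\<lambda>s. max (wk k s + \<rho> k * e (g (x (Suc k))) s) 0)"
    and rho_upd: "\<And>k. \<rho> (Suc k) =
       (if k = 0 \<or> compl_res M e g (x (Suc k)) (wk k) (\<rho> k)
                     \<le> \<tau> * compl_res M e g (x k) (wk (k - 1)) (\<rho> (k - 1))
        then \<rho> k else \<gamma> * \<rho> k)"
  shows "\<exists>xb. (\<forall>x'. is_solution M e f g x' \<longleftrightarrow> x' = xb) \<and> x \<longlonglongrightarrow> xb"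
proof -
  define G where "G x = L2norm M (gplus e g x)" for x
  have eL2: "\<And>y. e y \<in> L2 M" and elin: "\<And>a b y y'. AE w in M. e (a *\<^sub>R y + b *\<^sub>R y') w = a * e y w + b * e y' w"
    using emb unfolding dense_L2_embedding_def by auto
  obtain \<mu> where mu: "\<mu> > 0" and scg: "\<And>x x' t. 0 \<le> t \<Longrightarrow> t \<le> 1 \<Longrightarrow> f (t *\<^sub>R x + (1 - t) *\<^sub>R x')
          \<le> t * f x + (1 - t) * f x' - \<mu> / 2 * t * (1 - t) * (norm (x - x'))\<^sup>2"
    using f_sconv unfolding strongly_convex_def by blast
  have sc: "f ((1/2) *\<^sub>R a + (1/2) *\<^sub>R b) \<le> f a / 2 + f b / 2 - \<mu> / 8 * (norm (a - b))\<^sup>2" for a b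
    using scg[of "1/2" a b] by simp
  obtain m where fb: "\<And>x. m \<le> f x" using f_lower_bound[OF f_wlsc mu scg] by blast
  have flsc: "f z0 \<le> L" if "z \<longlonglongrightarrow> z0" "\<And>n. f (z n) \<le> b n" "b \<longlonglongrightarrow> L" for z z0 b L
    using wlsc_seq[OF f_wlsc that] .
  have Glsc: "G z0 \<le> L" if "z \<longlonglongrightarrow> z0" "\<And>n. G (z n) \<le> b n" "b \<longlonglongrightarrow> L" for z z0 b L
    using wlsc_seq[OF gp_wlsc, of z z0 b L] that unfolding G_def by blast
  have G0: "0 \<le> G a" for a unfolding G_def by (rule L2norm_nonneg)
  have gpL2: "gplus e g a \<in> L2 M" for a unfolding gplus_def by (rule L2_max0[OF eL2])
  have feasG: "feasible M e g a \<longleftrightarrow> G a = 0" for a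
  proof -
    have "G a = 0 \<longleftrightarrow> (AE w in M. gplus e g a w = 0)" unfolding G_def by (rule L2norm_zero_iff[OF gpL2])
    also have "\<dots> \<longleftrightarrow> (AE w in M. e (g a) w \<le> 0)" unfolding gplus_def
      by (intro AE_cong) (simp add: max_def)
    finally show ?thesis unfolding feasible_def by simp
  qed
  have gmidAE: "AE w in M. e (g ((1/2) *\<^sub>R a + (1/2) *\<^sub>R b)) w \<le> e (g a) w / 2 + e (g b) w / 2" for a b
  proof -
    let ?c = "(1/2) *\<^sub>R a + (1/2) *\<^sub>R b"
    let ?s = "(1/2) *\<^sub>R g a + (1/2) *\<^sub>R g b"
    have h0: "\<forall>x x' t. 0 \<le> t \<and> t \<le> 1 \<longrightarrow>
        (AE w in M. e (g (t *\<^sub>R x + (1 - t) *\<^sub>R x') - (t *\<^sub>R g x + (1 - t) *\<^sub>R g x')) w \<le> 0)"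
      using g_conv unfolding order_convex_def .
    have "AE w in M. e (g ((1/2) *\<^sub>R a + (1 - 1/2) *\<^sub>R b) - ((1/2) *\<^sub>R g a + (1 - 1/2) *\<^sub>R g b)) w \<le> 0"
      by (rule h0[rule_format, of "1/2" a b]) simp
    hence h1: "AE w in M. e (g ?c - ?s) w \<le> 0" by simp
    have h2: "AE w in M. e (g ?c - ?s) w = e (g ?c) w - e ?s w"
      using elin[of 1 "g ?c" "-1" ?s] by (simp only: scaleR_one scaleR_minus1_left mult_1 mult_minus1 add_uminus_conv_diff)
    have h3: "AE w in M. e ?s w = 1/2 * e (g a) w + 1/2 * e (g b) w" by (rule elin)
    show ?thesis using h1 h2 h3 by eventually_elim linarith
  qed
  have Gmid: "(G ((1/2) *\<^sub>R a + (1/2) *\<^sub>R b))\<^sup>2 \<le> (G a)\<^sup>2 + (G b)\<^sup>2" for a b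
  proof -
    let ?c = "(1/2) *\<^sub>R a + (1/2) *\<^sub>R b"
    have "integral\<^sup>L M (\<lambda>w. (gplus e g ?c w)\<^sup>2) \<le> integral\<^sup>L M (\<lambda>w. (gplus e g a w)\<^sup>2 + (gplus e g b w)\<^sup>2)"
    proof (rule integral_mono_AE)
      show "integrable M (\<lambda>w. (gplus e g ?c w)\<^sup>2)" by (rule L2_int[OF gpL2])
      show "integrable M (\<lambda>w. (gplus e g a w)\<^sup>2 + (gplus e g b w)\<^sup>2)"
        using L2_int[OF gpL2[of a]] L2_int[OF gpL2[of b]] by simp
      show "AE w in M. (gplus e g ?c w)\<^sup>2 \<le> (gplus e g a w)\<^sup>2 + (gplus e g b w)\<^sup>2"
        using gmidAE[of a b]
      proof eventually_elim
        case (elim w)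
        define u where "u = e (g a) w"
        define v where "v = e (g b) w"
        define c where "c = e (g ?c) w"
        have "c \<le> u / 2 + v / 2" using elim unfolding u_def v_def c_def by simp
        hence "0 \<le> max c 0" "max c 0 \<le> max (max u 0) (max v 0)" by auto
        hence "(max c 0)\<^sup>2 \<le> (max (max u 0) (max v 0))\<^sup>2" by (intro power_mono) auto
        also have "\<dots> \<le> (max u 0)\<^sup>2 + (max v 0)\<^sup>2" by (simp add: max_def)
        finally show ?case unfolding gplus_def u_def v_def c_def .
      qed
    qed
    also have "\<dots> = (G a)\<^sup>2 + (G b)\<^sup>2"
      unfolding G_def L2norm_sq using L2_int[OF gpL2[of a]] L2_int[OF gpL2[of b]] by simp
    finally show ?thesis unfolding G_def L2norm_sq .
  qed
  obtain x0 where "feasible M e g x0" using feas by blast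
  hence Gx0: "G x0 = 0" using feasG by simp
  have "\<exists>xb. G xb = 0 \<and> (\<forall>y. G y = 0 \<longrightarrow> f xb \<le> f y) \<and>
     (\<forall>z::nat\<Rightarrow>'x. (\<lambda>k. G (z k)) \<longlonglongrightarrow> 0 \<longrightarrow> (\<forall>\<delta>>0. eventually (\<lambda>k. f xb - \<delta> \<le> f (z k)) sequentially))"
  proof (rule abstract_solution[of \<mu> f m G x0, OF mu sc fb _ _ G0 Gmid Gx0])
    show "f z0 \<le> L" if "z \<longlonglongrightarrow> z0" "\<And>n. f (z n) \<le> b n" "b \<longlonglongrightarrow> L" for z z0 b L
      using flsc[OF that] .
    show "G z0 \<le> L" if "z \<longlonglongrightarrow> z0" "\<And>n. G (z n) \<le> b n" "b \<longlonglongrightarrow> L" for z z0 b L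
      using Glsc[OF that] .
  qed
  then obtain xb where Gxb: "G xb = 0" and xbmin: "\<forall>y. G y = 0 \<longrightarrow> f xb \<le> f y"
    and xblim: "\<forall>z::nat\<Rightarrow>'x. (\<lambda>k. G (z k)) \<longlonglongrightarrow> 0 \<longrightarrow> (\<forall>\<delta>>0. eventually (\<lambda>k. f xb - \<delta> \<le> f (z k)) sequentially)"
    by blast
  have sol: "is_solution M e f g x' \<longleftrightarrow> x' = xb" for x'
  proof
    assume "is_solution M e f g x'"
    hence a: "G x' = 0" "\<forall>y. G y = 0 \<longrightarrow> f x' \<le> f y" unfolding is_solution_def feasG by auto
    show "x' = xb" using abstract_unique[of \<mu> f G x' xb, OF mu sc G0 Gmid a Gxb xbmin] .
  next
    assume "x' = xb"
    thus "is_solution M e f g x'" unfolding is_solution_def feasG using Gxb xbmin by auto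
  qed
  have conv: "(\<lambda>k. G (x (Suc k))) \<longlonglongrightarrow> 0 \<and> (\<forall>\<delta>>0. eventually (\<lambda>k. f (x (Suc k)) \<le> f xb + \<delta>) sequentially)"
  proof -
    have feasxb: "AE s in M. e (g xb) s \<le> 0" using Gxb feasG unfolding feasible_def by simp
    have rpos: "\<rho> k > 0" for k
    proof (induction k)
      case 0 show ?case by (rule rho0)
    next
      case (Suc k) thus ?case using rho_upd[of k] gamma by simp
    qed
    have rmono: "\<rho> k \<le> \<rho> (Suc k)" for k
      using rho_upd[of k] gamma rpos[of k] by simp
    have rinc: "incseq \<rho>" using rmono by (rule incseq_SucI)
    define p where "p k = (\<lambda>s. max (e (g (x (Suc k))) s + wk k s / \<rho> k) 0)" for k
    define q where "q k = (\<lambda>s. max (e (g xb) s + wk k s / \<rho> k) 0)" for k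
    define mm where "mm k = (\<lambda>s. min (- e (g (x (Suc k))) s) (wk k s / \<rho> k))" for k
    define C where "C k = L2norm M (mm k)" for k
    define Wn where "Wn = L2norm M wmax"
    have wL2: "(\<lambda>s. wk k s / \<rho> k) \<in> L2 M" for k by (rule L2_divide[OF wk(1)])
    have pL2: "p k \<in> L2 M" for k unfolding p_def by (intro L2_max0 L2_add eL2 wL2)
    have qL2: "q k \<in> L2 M" for k unfolding q_def by (intro L2_max0 L2_add eL2 wL2)
    have mmL2: "mm k \<in> L2 M" for k unfolding mm_def by (intro L2_min L2_uminus eL2 wL2)
    have AI: "f (x (Suc k)) + \<rho> k / 2 * (L2norm M (p k))\<^sup>2 \<le> f xb + \<rho> k / 2 * (L2norm M (q k))\<^sup>2 + \<epsilon> k" for k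
      using approx_min[of k xb] unfolding aug_lagr_def p_def q_def by simp
    have qle: "L2norm M (q k) \<le> L2norm M (\<lambda>s. wk k s / \<rho> k)" for k
    proof (rule L2norm_mono[OF qL2 wL2])
      show "AE s in M. \<bar>q k s\<bar> \<le> \<bar>wk k s / \<rho> k\<bar>"
        using feasxb wk(2)[of k]
      proof eventually_elim
        case (elim s)
        have "0 \<le> wk k s / \<rho> k" using elim rpos[of k] by simp
        thus ?case using elim rpos[of k] unfolding q_def by (simp add: abs_of_pos)
      qed
    qed
    have wle: "L2norm M (\<lambda>s. wk k s / \<rho> k) \<le> Wn / \<rho> k" for k
    proof -
      have "L2norm M (\<lambda>s. wk k s / \<rho> k) \<le> L2norm M (\<lambda>s. wmax s / \<rho> k)"
      proof (rule L2norm_mono[OF wL2 L2_divide[OF wmax(1)]])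
        show "AE s in M. \<bar>wk k s / \<rho> k\<bar> \<le> \<bar>wmax s / \<rho> k\<bar>"
          using wk(2)[of k]
        proof eventually_elim
          case (elim s)
          have "wk k s / \<rho> k \<le> wmax s / \<rho> k" using elim rpos[of k] by (simp add: divide_right_mono)
          moreover have "0 \<le> wk k s / \<rho> k" using elim rpos[of k] by simp
          ultimately show ?case
            using abs_of_nonneg[of "wk k s / \<rho> k"] abs_of_nonneg[of "wmax s / \<rho> k"] by linarith
        qed
      qed
      also have "L2norm M (\<lambda>s. wmax s / \<rho> k) = Wn / \<rho> k"
        unfolding Wn_def L2norm_def using rpos[of k] by (simp add: power_divide real_sqrt_divide)
      finally show ?thesis .
    qed
    have qb: "\<rho> k / 2 * (L2norm M (q k))\<^sup>2 \<le> Wn\<^sup>2 / (2 * \<rho> k)" for k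
    proof -
      have "(L2norm M (q k))\<^sup>2 \<le> (Wn / \<rho> k)\<^sup>2"
        using qle[of k] wle[of k] L2norm_nonneg[of M "q k"] by (intro power_mono) auto
      hence "\<rho> k / 2 * (L2norm M (q k))\<^sup>2 \<le> \<rho> k / 2 * (Wn / \<rho> k)\<^sup>2"
        using rpos[of k] by (intro mult_left_mono) auto
      also have "\<dots> = Wn\<^sup>2 / (2 * \<rho> k)" using rpos[of k] by (simp add: power2_eq_square field_simps)
      finally show ?thesis .
    qed
    have Gp: "G (x (Suc k)) \<le> L2norm M (p k)" for k
      unfolding G_def
    proof (rule L2norm_mono[OF gpL2 pL2])
      show "AE s in M. \<bar>gplus e g (x (Suc k)) s\<bar> \<le> \<bar>p k s\<bar>"
        using wk(2)[of k]
      proof eventually_elim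
        case (elim s)
        have "0 \<le> wk k s / \<rho> k" using elim rpos[of k] by simp
        thus ?case unfolding gplus_def p_def by simp
      qed
    qed
    have GC: "G (x (Suc k)) \<le> C k" for k
      unfolding G_def C_def
    proof (rule L2norm_mono[OF gpL2 mmL2])
      show "AE s in M. \<bar>gplus e g (x (Suc k)) s\<bar> \<le> \<bar>mm k s\<bar>"
        using wk(2)[of k]
      proof eventually_elim
        case (elim s)
        have "0 \<le> wk k s / \<rho> k" using elim rpos[of k] by simp
        thus ?case unfolding gplus_def mm_def by (simp add: min_def max_def)
      qed
    qed
    have pbound: "\<rho> k / 2 * (L2norm M (p k))\<^sup>2 \<le> f xb - m + Wn\<^sup>2 / (2 * \<rho> k) + \<epsilon> k" for k
      using AI[of k] qb[of k] fb[of "x (Suc k)"] by linarith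
    show ?thesis
    proof (cases "\<exists>K. \<forall>k\<ge>K. \<rho> (Suc k) = \<rho> k")
      case True
      then obtain K where K: "\<And>k. k \<ge> K \<Longrightarrow> \<rho> (Suc k) = \<rho> k" by blast
      define R where "R = \<rho> K"
      have Rpos: "R > 0" unfolding R_def by (rule rpos)
      have rc0: "\<rho> (K + n) = R" for n
        by (induction n) (auto simp: R_def K)
      have rc: "\<rho> k = R" if "k \<ge> K" for k using rc0[of "k - K"] that by simp
      have Cdec: "C (Suc j) \<le> \<tau> * C j" if "j \<ge> K" for j
      proof -
        have e1: "\<rho> (Suc (Suc j)) = \<rho> (Suc j)" using K[of "Suc j"] that by simp
        have ne: "\<gamma> * \<rho> (Suc j) \<noteq> \<rho> (Suc j)" using gamma rpos[of "Suc j"] by simp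
        have "compl_res M e g (x (Suc (Suc j))) (wk (Suc j)) (\<rho> (Suc j))
                     \<le> \<tau> * compl_res M e g (x (Suc j)) (wk (Suc j - 1)) (\<rho> (Suc j - 1))"
          using rho_upd[of "Suc j"] e1 ne by (auto split: if_splits)
        thus ?thesis unfolding C_def mm_def compl_res_def by simp
      qed
      have Cnn: "0 \<le> C k" for k unfolding C_def by (rule L2norm_nonneg)
      have Cpow: "C (K + n) \<le> \<tau> ^ n * C K" for n
      proof (induction n)
        case 0 show ?case by simp
      next
        case (Suc n)
        have "C (K + Suc n) \<le> \<tau> * C (K + n)" using Cdec[of "K + n"] by simp
        also have "\<dots> \<le> \<tau> * (\<tau> ^ n * C K)" using Suc tau by (intro mult_left_mono) auto
        finally show ?case by simp
      qed
      have C0: "C \<longlonglongrightarrow> 0"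
      proof (rule LIMSEQ_offset[of _ K])
        have "(\<lambda>n. \<tau> ^ n * C K) \<longlonglongrightarrow> 0 * C K"
          using tau by (intro tendsto_mult_right LIMSEQ_power_zero) auto
        hence l: "(\<lambda>n. \<tau> ^ n * C K) \<longlonglongrightarrow> 0" by simp
        show "(\<lambda>n. C (n + K)) \<longlonglongrightarrow> 0"
        proof (rule tendsto_sandwich[OF _ _ tendsto_const l])
          show "eventually (\<lambda>n. 0 \<le> C (n + K)) sequentially" using Cnn by simp
          show "eventually (\<lambda>n. C (n + K) \<le> \<tau> ^ n * C K) sequentially"
            using Cpow by (simp add: add.commute)
        qed
      qed
      have Glim: "(\<lambda>k. G (x (Suc k))) \<longlonglongrightarrow> 0"
        using GC G0 by (intro tendsto_sandwich[OF _ _ tendsto_const C0]) auto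
      define Bd where "Bd = f xb - m + Wn\<^sup>2 / (2 * R) + \<epsilon> 0"
      define PP where "PP = sqrt (2 * Bd / R)"
      have epsle: "\<epsilon> k \<le> \<epsilon> 0" for k using eps(1) unfolding decseq_def by auto
      have fineq: "f (x (Suc k)) \<le> f xb + (R * PP * C k + R / 2 * (C k)\<^sup>2 + \<epsilon> k)" if "k \<ge> K" for k
      proof -
        have rk: "\<rho> k = R" using rc[OF that] .
        have "R / 2 * (L2norm M (p k))\<^sup>2 \<le> Bd" using pbound[of k] epsle[of k] rk unfolding Bd_def by simp
        hence "(L2norm M (p k))\<^sup>2 \<le> 2 * Bd / R" using Rpos by (simp add: field_simps)
        hence pP: "L2norm M (p k) \<le> PP" unfolding PP_def by (rule real_le_rsqrt)
        have "L2norm M (q k) \<le> L2norm M (\<lambda>s. wk k s / \<rho> k)" by (rule qle)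
        also have "(\<lambda>s. wk k s / \<rho> k) = (\<lambda>s. p k s + mm k s)"
          unfolding p_def mm_def by (rule ext) (simp add: max_def min_def)
        also have "L2norm M (\<lambda>s. p k s + mm k s) \<le> L2norm M (p k) + C k"
          unfolding C_def by (rule L2_minkowski[OF pL2 mmL2])
        finally have qpc: "L2norm M (q k) \<le> L2norm M (p k) + C k" .
        have "(L2norm M (q k))\<^sup>2 \<le> (L2norm M (p k) + C k)\<^sup>2"
          using qpc L2norm_nonneg[of M "q k"] by (intro power_mono) auto
        also have "\<dots> = (L2norm M (p k))\<^sup>2 + 2 * L2norm M (p k) * C k + (C k)\<^sup>2"
          by (simp add: power2_eq_square algebra_simps)
        also have "\<dots> \<le> (L2norm M (p k))\<^sup>2 + 2 * PP * C k + (C k)\<^sup>2"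
          using pP Cnn[of k] by (simp add: mult_right_mono)
        finally have qq: "(L2norm M (q k))\<^sup>2 \<le> (L2norm M (p k))\<^sup>2 + 2 * PP * C k + (C k)\<^sup>2" .
        have "R / 2 * (L2norm M (q k))\<^sup>2 \<le> R / 2 * ((L2norm M (p k))\<^sup>2 + 2 * PP * C k + (C k)\<^sup>2)"
          using qq Rpos by (intro mult_left_mono) auto
        hence "R / 2 * (L2norm M (q k))\<^sup>2 \<le> R / 2 * (L2norm M (p k))\<^sup>2 + (R * PP * C k + R / 2 * (C k)\<^sup>2)"
          by (simp add: algebra_simps)
        moreover have "f (x (Suc k)) + R / 2 * (L2norm M (p k))\<^sup>2 \<le> f xb + R / 2 * (L2norm M (q k))\<^sup>2 + \<epsilon> k"
          using AI[of k] unfolding rk .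
        ultimately show ?thesis by linarith
      qed
      have ulim: "(\<lambda>k. R * PP * C k + R / 2 * (C k)\<^sup>2 + \<epsilon> k) \<longlonglongrightarrow> 0"
      proof -
        have "(\<lambda>k. R * PP * C k + R / 2 * (C k)\<^sup>2 + \<epsilon> k) \<longlonglongrightarrow> R * PP * 0 + R / 2 * 0\<^sup>2 + 0"
          by (intro tendsto_intros C0 eps(2))
        thus ?thesis by simp
      qed
      have ev: "eventually (\<lambda>k. f (x (Suc k)) \<le> f xb + (R * PP * C k + R / 2 * (C k)\<^sup>2 + \<epsilon> k)) sequentially"
        using fineq by (auto simp: eventually_sequentially)
      show ?thesis
      proof (intro conjI allI impI)
        show "(\<lambda>k. G (x (Suc k))) \<longlonglongrightarrow> 0" by (rule Glim)
        fix \<delta> :: real assume "\<delta> > 0"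
        show "eventually (\<lambda>k. f (x (Suc k)) \<le> f xb + \<delta>) sequentially"
          by (rule ev_bound[OF ev ulim \<open>\<delta> > 0\<close>])
      qed
    next
      case False
      hence inc: "\<And>K. \<exists>k\<ge>K. \<rho> (Suc k) = \<gamma> * \<rho> k"
        using rho_upd by (metis (full_types))
      have grow: "\<exists>K. \<gamma> ^ N * \<rho> 0 \<le> \<rho> K" for N
      proof (induction N)
        case 0 show ?case by auto
      next
        case (Suc N)
        then obtain K where "\<gamma> ^ N * \<rho> 0 \<le> \<rho> K" by blast
        moreover obtain k where "k \<ge> K" "\<rho> (Suc k) = \<gamma> * \<rho> k" using inc by blast
        moreover have "\<rho> K \<le> \<rho> k" using rinc \<open>k \<ge> K\<close> by (simp add: incseqD)
        ultimately have "\<gamma> ^ Suc N * \<rho> 0 \<le> \<rho> (Suc k)" using gamma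
          by (simp add: mult.assoc)
        thus ?case by blast
      qed
      have rinv: "(\<lambda>k. 1 / \<rho> k) \<longlonglongrightarrow> 0"
      proof (rule LIMSEQ_I)
        fix r :: real assume r: "r > 0"
        obtain N where N: "1 / (r * \<rho> 0) < \<gamma> ^ N" using real_arch_pow[OF gamma] by blast
        obtain K where K: "\<gamma> ^ N * \<rho> 0 \<le> \<rho> K" using grow by blast
        have "1 / r < \<rho> K"
        proof -
          have "1 / r = 1 / (r * \<rho> 0) * \<rho> 0" using rho0 by simp
          also have "\<dots> < \<gamma> ^ N * \<rho> 0" using N rho0 by (intro mult_strict_right_mono) auto
          finally show ?thesis using K by simp
        qed
        have "norm (1 / \<rho> n - 0) < r" if "n \<ge> K" for n
        proof -
          have "\<rho> K \<le> \<rho> n" using rinc that by (simp add: incseqD)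
          hence "1 / r < \<rho> n" using \<open>1 / r < \<rho> K\<close> by simp
          thus ?thesis using r rpos[of n] by (simp add: field_simps)
        qed
        thus "\<exists>no. \<forall>n\<ge>no. norm (1 / \<rho> n - 0) < r" by blast
      qed
      have fineq: "f (x (Suc k)) \<le> f xb + (Wn\<^sup>2 / 2 * (1 / \<rho> k) + \<epsilon> k)" for k
      proof -
        have "0 \<le> \<rho> k / 2 * (L2norm M (p k))\<^sup>2" using rpos[of k] by simp
        moreover have "Wn\<^sup>2 / (2 * \<rho> k) = Wn\<^sup>2 / 2 * (1 / \<rho> k)" by simp
        ultimately show ?thesis using AI[of k] qb[of k] by linarith
      qed
      have ulim: "(\<lambda>k. Wn\<^sup>2 / 2 * (1 / \<rho> k) + \<epsilon> k) \<longlonglongrightarrow> 0"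
        using tendsto_add[OF tendsto_mult_right_zero[OF rinv, of "Wn\<^sup>2 / 2"] eps(2)] by (simp add: mult.commute)
      define v where "v k = 2 * (1 / \<rho> k) * (f xb - m + Wn\<^sup>2 / 2 * (1 / \<rho> k) + \<epsilon> k)" for k
      have vlim: "v \<longlonglongrightarrow> 0"
      proof -
        have "v \<longlonglongrightarrow> 2 * 0 * (f xb - m + Wn\<^sup>2 / 2 * 0 + 0)"
          unfolding v_def by (intro tendsto_intros rinv eps(2))
        thus ?thesis by simp
      qed
      have Gv: "G (x (Suc k)) \<le> sqrt (v k)" for k
      proof -
        have "\<rho> k / 2 * (L2norm M (p k))\<^sup>2 \<le> f xb - m + Wn\<^sup>2 / 2 * (1 / \<rho> k) + \<epsilon> k"
          using pbound[of k] by simp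
        hence "(L2norm M (p k))\<^sup>2 \<le> v k" unfolding v_def using rpos[of k] by (simp add: field_simps)
        moreover have "(G (x (Suc k)))\<^sup>2 \<le> (L2norm M (p k))\<^sup>2"
          using Gp[of k] G0[of "x (Suc k)"] by (intro power_mono) auto
        ultimately have "(G (x (Suc k)))\<^sup>2 \<le> v k" by linarith
        thus ?thesis by (rule real_le_rsqrt)
      qed
      have Glim: "(\<lambda>k. G (x (Suc k))) \<longlonglongrightarrow> 0"
      proof (rule tendsto_sandwich[OF _ _ tendsto_const])
        show "eventually (\<lambda>k. 0 \<le> G (x (Suc k))) sequentially" using G0[of "x (Suc _)"] by simp
        show "eventually (\<lambda>k. G (x (Suc k)) \<le> sqrt (v k)) sequentially" using Gv by simp
        show "(\<lambda>k. sqrt (v k)) \<longlonglongrightarrow> 0" using tendsto_real_sqrt[OF vlim] by simp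
      qed
      show ?thesis
      proof (intro conjI allI impI)
        show "(\<lambda>k. G (x (Suc k))) \<longlonglongrightarrow> 0" by (rule Glim)
        fix \<delta> :: real assume "\<delta> > 0"
        show "eventually (\<lambda>k. f (x (Suc k)) \<le> f xb + \<delta>) sequentially"
          by (rule ev_bound[OF always_eventually ulim \<open>\<delta> > 0\<close>]) (use fineq in blast)
      qed
    qed
  qed
  have xconv: "x \<longlonglongrightarrow> xb"
  proof (rule abstract_conv[of \<mu> f G xb, OF mu sc G0 Gmid Gxb xblim])
    show "(\<lambda>k. G (x k)) \<longlonglongrightarrow> 0" using conv filterlim_sequentially_Suc[of "\<lambda>k. G (x k)"] by simp
    fix \<delta> :: real assume "\<delta> > 0"
    thus "eventually (\<lambda>k. f (x k) \<le> f xb + \<delta>) sequentially"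
      using conv eventually_sequentially_Suc[of "\<lambda>k. f (x k) \<le> f xb + \<delta>"] by simp
  qed
  show ?thesis using sol xconv by blast
qed

end
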